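(* Let $S$ be any set with $\bot \notin S$, and let $\mathcal{P}_\star(S) = \{ X \subseteq S \cup \{\bot\} \mid X \text{ infinite} \Rightarrow \bot \in X \}$. Define a relation $\sqsubseteq$ on $\mathcal{P}_\star(S)$ by $$X \sqsubseteq Y \iff X = Y \ \lor\ \big(\bot \in X \land (Y = \emptyset \lor X \setminus \{\bot\} \subseteq Y)\big).$$ Then $(\mathcal{P}_\star(S), \sqsubseteq)$ is an $\omega$-complete partial order with a least element (i.e., $\sqsubseteq$ is a partial order, there is a least element, and every increasing sequence $X_0 \sqsubseteq X_1 \sqsubseteq X_2 \sqsubseteq \cdots$ has a supremum).
   Context: $\bot$ is a fresh symbol representing non-termination. An element $X \in \mathcal{P}_\star(S)$ represents the set of outcomes of a nondeterministic computation: $X=\emptyset$ is the error value, $\bot\in X$ means some branch diverges, and the other elements of $X$ are returned values. *)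

theory Defs
  imports Main
begin

text \<open>The bottom symbol bt (representing non-termination) is an explicit element of the ambient type, assumed not in S.\<close>

definition Pstar :: "'a \<Rightarrow> 'a set \<Rightarrow> 'a set set" where
  "Pstar bt S = {X. X \<subseteq> S \<union> {bt} \<and> (infinite X \<longrightarrow> bt \<in> X)}"

definition le_star :: "'a \<Rightarrow> 'a set \<Rightarrow> 'a set \<Rightarrow> bool" where
  "le_star bt X Y \<longleftrightarrow> X = Y \<or> (bt \<in> X \<and> (Y = {} \<or> X - {bt} \<subseteq> Y))"

definition le_star_rel :: "'a \<Rightarrow> 'a set \<Rightarrow> ('a set \<times> 'a set) set" where
  "le_star_rel bt S = {(X, Y). X \<in> Pstar bt S \<and> Y \<in> Pstar bt S \<and> le_star bt X Y}"

end

theory Submission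
  imports Defs
begin

lemma le_trans_star: "le_star bt X Y \<Longrightarrow> le_star bt Y Z \<Longrightarrow> le_star bt X Z"
  unfolding le_star_def by blast

lemma le_antisym_star: "le_star bt X Y \<Longrightarrow> le_star bt Y X \<Longrightarrow> X = Y"
  unfolding le_star_def by blast

lemma chain_mono:
  assumes "\<forall>n. le_star bt (C n) (C (Suc n))" and "m \<le> k"
  shows "le_star bt (C m) (C k)"
  using assms(2)
proof (induction k)
  case 0 then show ?case by (simp add: le_star_def)
next
  case (Suc k)
  show ?case
  proof (cases "m = Suc k")
    case True then show ?thesis by (simp add: le_star_def)
  next
    case False
    then have "m \<le> k" using Suc.prems by simp
    then have a: "le_star bt (C m) (C k)" by (rule Suc.IH)
    have b: "le_star bt (C k) (C (Suc k))" using assms(1) by (rule spec)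
    show ?thesis by (rule le_trans_star[OF a b])
  qed
qed

theorem proposition4p1:
  fixes bt :: 'a and S :: "'a set"
  assumes "bt \<notin> S"
  shows "partial_order_on (Pstar bt S) (le_star_rel bt S)
    \<and> (\<exists>B\<in>Pstar bt S. \<forall>X\<in>Pstar bt S. le_star bt B X)
    \<and> (\<forall>C :: nat \<Rightarrow> 'a set. (\<forall>n. C n \<in> Pstar bt S) \<and> (\<forall>n. le_star bt (C n) (C (Suc n))) \<longrightarrow>
         (\<exists>U\<in>Pstar bt S. (\<forall>n. le_star bt (C n) U) \<and>
            (\<forall>V\<in>Pstar bt S. (\<forall>n. le_star bt (C n) V) \<longrightarrow> le_star bt U V)))"
proof (intro conjI allI impI)
  show "partial_order_on (Pstar bt S) (le_star_rel bt S)"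
    unfolding partial_order_on_def preorder_on_def refl_on_def trans_on_def antisym_on_def le_star_rel_def
    using le_trans_star le_antisym_star by (auto simp: le_star_def)
next
  show "\<exists>B\<in>Pstar bt S. \<forall>X\<in>Pstar bt S. le_star bt B X"
    by (rule bexI[of _ "{bt}"]) (auto simp: Pstar_def le_star_def)
next
  fix C :: "nat \<Rightarrow> 'a set"
  assume h: "(\<forall>n. C n \<in> Pstar bt S) \<and> (\<forall>n. le_star bt (C n) (C (Suc n)))"
  then have P: "\<And>n. C n \<in> Pstar bt S" and ch: "\<forall>n. le_star bt (C n) (C (Suc n))" by auto
  show "\<exists>U\<in>Pstar bt S. (\<forall>n. le_star bt (C n) U) \<and>
            (\<forall>V\<in>Pstar bt S. (\<forall>n. le_star bt (C n) V) \<longrightarrow> le_star bt U V)"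
  proof (cases "\<exists>n. bt \<notin> C n")
    case True
    then obtain n where n: "bt \<notin> C n" by blast
    have ub: "le_star bt (C m) (C n)" for m
    proof (cases "m \<le> n")
      case True then show ?thesis using chain_mono[OF ch] by blast
    next
      case False
      then have "le_star bt (C n) (C m)" using chain_mono[OF ch] by simp
      then have "C n = C m" using n by (simp add: le_star_def)
      then show ?thesis by (simp add: le_star_def)
    qed
    show ?thesis
    proof (rule bexI[of _ "C n"], intro conjI allI ballI impI)
      fix m show "le_star bt (C m) (C n)" by (rule ub)
    next
      fix V assume "\<forall>m. le_star bt (C m) V"
      then show "le_star bt (C n) V" by blast
    qed (rule P)
  next
    case False
    then have bt: "\<And>n. bt \<in> C n" by simp
    define W where "W = (\<Union>n. C n)"
    have "W \<subseteq> S \<union> {bt}" using P unfolding W_def Pstar_def by auto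
    moreover have "bt \<in> W" using bt unfolding W_def by auto
    ultimately have WP: "W \<in> Pstar bt S" unfolding Pstar_def by simp
    have "\<forall>n. le_star bt (C n) W" using bt unfolding W_def le_star_def by auto
    moreover have "le_star bt W V" if "\<forall>n. le_star bt (C n) V" for V
    proof -
      have "V = {} \<or> (\<forall>n. C n - {bt} \<subseteq> V)" using that unfolding le_star_def by auto
      then show ?thesis using bt unfolding le_star_def W_def by auto
    qed
    ultimately show ?thesis using WP by (intro bexI[of _ W]) auto
  qed
qed

end
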